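(* Let $\lambda\in\mathbf{C}$ with $\lambda\neq 0$ and $\lambda\neq1$. For every $n\in\mathbf{Z}_{+}$ (nonnegative integers), \[ \lambda H_{n}(x\vert\lambda^{-1})+H_{n}(x\vert\lambda)=(1+\lambda)\sum_{k=0}^{n}\binom{n}{k}H_{n-k}(\lambda^{-1})H_{k}(x\vert\lambda). \]
   Context: For $\mu\in\mathbf{C}$, $\mu\neq1$, the Frobenius–Euler polynomials $H_n(x\vert\mu)$ are defined by the generating function $\frac{1-\mu}{e^{t}-\mu}e^{xt}=\sum_{n=0}^{\infty}H_{n}(x\vert\mu)\frac{t^{n}}{n!}$, and the Frobenius–Euler numbers are $H_n(\mu)=H_n(0\vert\mu)$. *)

theory Defs
  imports "HOL-Computational_Algebra.Formal_Power_Series"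
begin

definition FE_gf :: "complex \<Rightarrow> complex \<Rightarrow> complex fps" where
  "FE_gf x mu = fps_const (1 - mu) / (fps_exp 1 - fps_const mu) * fps_exp x"

definition FE_poly :: "nat \<Rightarrow> complex \<Rightarrow> complex \<Rightarrow> complex" where
  "FE_poly n x mu = fact n * fps_nth (FE_gf x mu) n"

definition FE_num :: "nat \<Rightarrow> complex \<Rightarrow> complex" where
  "FE_num n mu = FE_poly n 0 mu"

end

theory Submission
  imports Defs
begin
unbundle fps_syntax

lemma FE_gf_mult:
  assumes "mu \<noteq> 1"
  shows "FE_gf x mu * (fps_exp 1 - fps_const mu) = fps_const (1 - mu) * fps_exp x"
proof -
  have h: "(fps_exp 1 - fps_const mu) $ 0 \<noteq> 0" using assms by simp
  have "FE_gf x mu * (fps_exp 1 - fps_const mu)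
      = fps_const (1 - mu) * fps_exp x * (inverse (fps_exp 1 - fps_const mu) * (fps_exp 1 - fps_const mu))"
    unfolding FE_gf_def fps_divide_unit[OF h] by (simp add: algebra_simps)
  also have "\<dots> = fps_const (1 - mu) * fps_exp x" using inverse_mult_eq_1[OF h] by simp
  finally show ?thesis .
qed

lemma FE_prod_nth:
  "fact n * (A * B :: complex fps) $ n
     = (\<Sum>k=0..n. of_nat (n choose k) * (fact (n - k) * A $ (n - k)) * (fact k * B $ k))"
proof -
  have "fact n * (A * B) $ n = fact n * (\<Sum>k=0..n. B $ k * A $ (n - k))"
    by (simp add: fps_mult_nth mult.commute[of A B])
  also have "\<dots> = (\<Sum>k=0..n. fact n * (B $ k * A $ (n - k)))" by (simp add: sum_distrib_left)
  also have "\<dots> = (\<Sum>k=0..n. of_nat (n choose k) * (fact (n - k) * A $ (n - k)) * (fact k * B $ k))"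
  proof (rule sum.cong[OF refl])
    fix k assume "k \<in> {0..n}"
    then have "k \<le> n" by simp
    then have "(of_nat (fact k * fact (n - k) * (n choose k)) :: complex) = of_nat (fact n)"
      by (subst binomial_fact_lemma) (assumption, rule refl)
    then have eq: "(fact n :: complex) = fact k * fact (n - k) * of_nat (n choose k)"
      by (simp only: of_nat_mult of_nat_fact)
    show "fact n * (B $ k * A $ (n - k)) = of_nat (n choose k) * (fact (n - k) * A $ (n - k)) * (fact k * B $ k)"
      unfolding eq by (simp only: ac_simps)
  qed
  finally show ?thesis .
qed

lemma aux: "fps_const (a::complex) * (E - fps_const b) + fps_const (- a) * (E - fps_const c) = fps_const (a*c - a*b)"
proof -
  have "fps_const (a*c - a*b) = fps_const a * fps_const c - fps_const a * fps_const b" by simp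
  moreover have "fps_const (- a) = - fps_const a" by simp
  moreover have "\<And>p q r :: complex fps. p * (E - q) + (- p) * (E - r) = p * r - p * q"
    by (simp add: algebra_simps)
  ultimately show ?thesis by (simp only:)
qed

theorem theorem2:
  fixes lam x :: complex and n :: nat
  assumes "lam \<noteq> 0" and "lam \<noteq> 1"
  shows "lam * FE_poly n x (inverse lam) + FE_poly n x lam
         = (1 + lam) * (\<Sum>k=0..n. of_nat (n choose k) * FE_num (n - k) (inverse lam) * FE_poly k x lam)"
proof -
  have il: "inverse lam \<noteq> 1" using assms(2) by (metis inverse_1 inverse_inverse_eq)
  define E where "E = (fps_exp 1 :: complex fps)"
  define D1 where "D1 = E - fps_const (inverse lam)"
  define D2 where "D2 = E - fps_const lam"
  have "D1 $ 0 \<noteq> 0" using il by (simp add: D1_def E_def)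
  then have d1: "D1 \<noteq> 0" by auto
  have "D2 $ 0 \<noteq> 0" using assms(2) by (simp add: D2_def E_def)
  then have d2: "D2 \<noteq> 0" by auto
  have g1: "FE_gf x (inverse lam) * D1 = fps_const (1 - inverse lam) * fps_exp x"
    using FE_gf_mult[OF il] unfolding D1_def E_def .
  have g0: "FE_gf 0 (inverse lam) * D1 = fps_const (1 - inverse lam)"
    using FE_gf_mult[OF il, of 0] unfolding D1_def E_def by simp
  have g2: "FE_gf x lam * D2 = fps_const (1 - lam) * fps_exp x"
    using FE_gf_mult[OF assms(2)] unfolding D2_def E_def .
  have key: "fps_const lam * FE_gf x (inverse lam) + FE_gf x lam
        = fps_const (1 + lam) * FE_gf 0 (inverse lam) * FE_gf x lam"
  proof -
    have "(fps_const lam * FE_gf x (inverse lam) + FE_gf x lam) * D1 * D2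
        = (fps_const (1 + lam) * FE_gf 0 (inverse lam) * FE_gf x lam) * D1 * D2"
    proof -
      have L: "(fps_const lam * FE_gf x (inverse lam) + FE_gf x lam) * D1 * D2
         = fps_const lam * (FE_gf x (inverse lam) * D1) * D2 + (FE_gf x lam * D2) * D1"
        by (simp add: algebra_simps)
      have R: "(fps_const (1 + lam) * FE_gf 0 (inverse lam) * FE_gf x lam) * D1 * D2
         = fps_const (1 + lam) * (FE_gf 0 (inverse lam) * D1) * (FE_gf x lam * D2)"
        by (simp add: algebra_simps)
      have "fps_const lam * (fps_const (1 - inverse lam) * fps_exp x) * D2 + (fps_const (1 - lam) * fps_exp x) * D1
          = fps_const (1 + lam) * fps_const (1 - inverse lam) * (fps_const (1 - lam) * fps_exp x)"
      proof -
        have "fps_const lam * fps_const (1 - inverse lam) * D2 + fps_const (1 - lam) * D1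
            = fps_const (1 + lam) * fps_const (1 - inverse lam) * fps_const (1 - lam)"
        proof -
          have n1: "lam * (1 - inverse lam) = lam - 1" using assms(1) by (simp add: field_simps)
          have e1: "fps_const lam * fps_const (1 - inverse lam) = fps_const (lam - 1)"
            by (simp only: fps_const_mult n1)
          have n2: "(1 + lam) * (1 - inverse lam) * (1 - lam) = (lam - 1) * (inverse lam - lam)"
            using assms(1) by (simp add: field_simps)
          have e2: "fps_const (1 + lam) * fps_const (1 - inverse lam) * fps_const (1 - lam)
                = fps_const ((lam - 1) * (inverse lam - lam))"
            by (simp only: fps_const_mult n2)
          have "fps_const (lam - 1) * D2 + fps_const (1 - lam) * D1
              = fps_const ((lam - 1) * (inverse lam - lam))"
            unfolding D1_def D2_def using aux[of "lam - 1" E lam "inverse lam"]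
            by (simp add: algebra_simps)
          then show ?thesis using e1 e2 by simp
        qed
        then have "(fps_const lam * fps_const (1 - inverse lam) * D2 + fps_const (1 - lam) * D1) * fps_exp x
            = fps_const (1 + lam) * fps_const (1 - inverse lam) * fps_const (1 - lam) * fps_exp x" by simp
        then show ?thesis by (simp add: algebra_simps del: fps_const_mult)
      qed
      then show ?thesis unfolding L R g1 g0 g2 by simp
    qed
    then show ?thesis using d1 d2 by simp
  qed
  have "lam * FE_poly n x (inverse lam) + FE_poly n x lam
      = fact n * (fps_const lam * FE_gf x (inverse lam) + FE_gf x lam) $ n"
    unfolding FE_poly_def by (simp add: algebra_simps)
  also have "\<dots> = (1 + lam) * (fact n * (FE_gf 0 (inverse lam) * FE_gf x lam) $ n)"
    unfolding key by (simp add: mult.assoc)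
  also have "\<dots> = (1 + lam) * (\<Sum>k=0..n. of_nat (n choose k) * FE_num (n - k) (inverse lam) * FE_poly k x lam)"
    unfolding FE_prod_nth FE_num_def FE_poly_def ..
  finally show ?thesis .
qed

end
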